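(* Given distributions $F_S,F_B$, let $p^*:=\inf\{p:\mathbb{P}[S\ge p]\le 1/5\}$. If $\mathbb{P}[B\le p^*]\le 1/5$, then $\mathsf{W}(p^*;F_S,F_B)\ge\frac{17}{25}\,\mathsf{OPT\text{-}W}(F_S,F_B)$.
   Context: Asymmetric bilateral trade: $S\sim F_S$, $B\sim F_B$ independent, distributions on $[0,\infty)$ with finite means. Posting price $p$, trade iff $B>p\ge S$. $\mathsf{W}(p;F_S,F_B)=\mathbb{E}[S+(B-S)\mathbf 1_{B>p\ge S}]$, $\mathsf{OPT\text{-}W}(F_S,F_B)=\mathbb{E}[\max\{B,S\}]$. *)

theory Defs
  imports "HOL-Probability.Probability"
begin

definition valid_dist :: "real measure \<Rightarrow> bool" where
  "valid_dist F \<longleftrightarrow> prob_space F \<and> sets F = sets borel \<and>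
     (AE x in F. 0 \<le> x) \<and> integrable F (\<lambda>x. x)"

definition GFT_W :: "real \<Rightarrow> real measure \<Rightarrow> real measure \<Rightarrow> real" where
  "GFT_W p FS FB = (\<integral>z. (fst z + (snd z - fst z) *
       (if snd z > p \<and> p \<ge> fst z then 1 else 0)) \<partial>(FS \<Otimes>\<^sub>M FB))"

definition OPT_W :: "real measure \<Rightarrow> real measure \<Rightarrow> real" where
  "OPT_W FS FB = (\<integral>z. max (snd z) (fst z) \<partial>(FS \<Otimes>\<^sub>M FB))"

definition p_star :: "real measure \<Rightarrow> real" where
  "p_star FS = Inf {p. measure FS {s. s \<ge> p} \<le> 1/5}"

end

theory Submission
  imports Defs
begin
lemma pstar_facts:
  assumes "valid_dist FS"
  shows "0 \<le> p_star FS" "measure FS {s. p_star FS < s} \<le> 1/5" "measure FS {s. s < p_star FS} \<le> 4/5"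
proof -
  have P: "prob_space FS" and SE[measurable_cong]: "sets FS = sets borel" and AE0: "AE x in FS. 0 \<le> x"
    and I: "integrable FS (\<lambda>x. x)" using assms by (auto simp: valid_dist_def)
  interpret prob_space FS by (rule P)
  have sp: "space FS = UNIV" using sets_eq_imp_space_eq[OF SE] by simp
  have meas: "A \<in> sets FS" if "A \<in> sets borel" for A using that SE by simp
  have compl: "measure FS {s. q \<le> s} = 1 - measure FS {s. s < q}" for q
  proof -
    have "measure FS (space FS - {s. s < q}) = 1 - measure FS {s. s < q}"
      by (rule prob_compl) (simp add: meas)
    moreover have "space FS - {s. s < q} = {s. q \<le> s}" using sp by auto
    ultimately show ?thesis by simp
  qed
  have neg0: "measure FS {s. s < 0} = 0"
  proof -
    have "emeasure FS {x\<in>space FS. \<not> 0 \<le> x} = 0"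
      using AE0 by (subst (asm) AE_iff_measurable[OF _ refl]) (auto simp: meas)
    then show ?thesis using sp by (simp add: measure_def not_le)
  qed
  define A where "A = {p. measure FS {s. s \<ge> p} \<le> 1/5}"
  have pdef: "p_star FS = Inf A" unfolding A_def p_star_def by simp
  have Alow: "0 \<le> q" if "q \<in> A" for q
  proof (rule ccontr)
    assume "\<not> 0 \<le> q"
    then have "measure FS {s. s < q} \<le> measure FS {s. s < 0}"
      by (intro finite_measure_mono) (auto simp: meas)
    then have "measure FS {s. s < q} = 0" using neg0 by (simp add: measure_nonneg antisym)
    then show False using that compl[of q] by (simp add: A_def)
  qed
  define E where "E = (\<integral>x. x \<partial>FS)"
  have E0: "0 \<le> E" unfolding E_def using AE0 by (rule integral_nonneg_AE)
  have "measure FS {x\<in>space FS. x \<ge> 5*E+1} \<le> E / (5*E+1)"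
    unfolding E_def by (rule integral_Markov_inequality_measure) (use I AE0 E0 E_def in auto)
  also have "\<dots> \<le> 1/5" using E0 by (simp add: field_simps)
  finally have "5*E+1 \<in> A" using sp by (simp add: A_def)
  then have Ane: "A \<noteq> {}" by auto
  have bdd: "bdd_below A" using Alow by (auto simp: bdd_below_def)
  show p0: "0 \<le> p_star FS" unfolding pdef using Ane Alow by (intro cInf_greatest) auto
  let ?p = "p_star FS"
  define U where "U n = {s. ?p + 1/Suc n \<le> s}" for n :: nat
  have Um: "measure FS (U n) \<le> 1/5" for n
  proof -
    have "Inf A < ?p + 1/Suc n" unfolding pdef by simp
    then obtain q where q: "q \<in> A" "q < ?p + 1/Suc n" using cInf_lessD[OF Ane] by blast
    have "measure FS (U n) \<le> measure FS {s. q \<le> s}"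
      using q by (intro finite_measure_mono) (auto simp: U_def meas)
    also have "\<dots> \<le> 1/5" using q by (simp add: A_def)
    finally show ?thesis .
  qed
  have Uinc: "incseq U"
  proof (rule incseq_SucI)
    fix n
    have "1/ real (Suc (Suc n)) \<le> 1 / Suc n" by (simp add: frac_le)
    then show "U n \<subseteq> U (Suc n)" by (auto simp: U_def)
  qed
  have Uun: "(\<Union>n. U n) = {s. ?p < s}"
  proof safe
    fix s n assume "s \<in> U n" then show "?p < s"
    proof -
      have h: "?p + 1/Suc n \<le> s" using \<open>s \<in> U n\<close> unfolding U_def mem_Collect_eq .
      have "0 < 1/real (Suc n)" by (intro divide_pos_pos) auto
      then show ?thesis using h by linarith
    qed
  next
    fix s assume "?p < s"
    then obtain n where "1 / real (Suc n) < s - ?p"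
      using nat_approx_posE[of "s - ?p"] by auto
    then have "?p + 1/Suc n \<le> s" by linarith
    then show "s \<in> (\<Union>n. U n)" unfolding U_def by blast
  qed
  have "(\<lambda>n. measure FS (U n)) \<longlonglongrightarrow> measure FS (\<Union>n. U n)"
  proof (rule finite_Lim_measure_incseq)
    show "range U \<subseteq> sets FS" by (auto simp: U_def)
    show "incseq U" by (rule Uinc)
  qed
  then show "measure FS {s. ?p < s} \<le> 1/5"
    unfolding Uun by (rule LIMSEQ_le_const2) (use Um in auto)
  define V where "V n = {s. s < ?p - 1/Suc n}" for n :: nat
  have Vm: "measure FS (V n) \<le> 4/5" for n
  proof -
    have "?p - 1/Suc n \<notin> A"
    proof
      assume "?p - 1/Suc n \<in> A"
      then have "Inf A \<le> ?p - 1/Suc n" using bdd by (rule cInf_lower)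
      then show False unfolding pdef by simp
    qed
    then show ?thesis using compl[of "?p - 1/Suc n"] by (simp add: A_def V_def)
  qed
  have Vinc: "incseq V"
  proof (rule incseq_SucI)
    fix n
    have "1/ real (Suc (Suc n)) \<le> 1 / Suc n" by (simp add: frac_le)
    then show "V n \<subseteq> V (Suc n)" by (auto simp: V_def)
  qed
  have Vun: "(\<Union>n. V n) = {s. s < ?p}"
  proof safe
    fix s n assume "s \<in> V n" then show "s < ?p"
    proof -
      have h: "s < ?p - 1/Suc n" using \<open>s \<in> V n\<close> unfolding V_def mem_Collect_eq .
      have "0 < 1/real (Suc n)" by (intro divide_pos_pos) auto
      then show ?thesis using h by linarith
    qed
  next
    fix s assume "s < ?p"
    then obtain n where "1 / real (Suc n) < ?p - s"
      using nat_approx_posE[of "?p - s"] by auto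
    then have "s < ?p - 1/Suc n" by linarith
    then show "s \<in> (\<Union>n. V n)" unfolding V_def by blast
  qed
  have "(\<lambda>n. measure FS (V n)) \<longlonglongrightarrow> measure FS (\<Union>n. V n)"
  proof (rule finite_Lim_measure_incseq)
    show "range V \<subseteq> sets FS" by (auto simp: V_def)
    show "incseq V" by (rule Vinc)
  qed
  then show "measure FS {s. s < ?p} \<le> 4/5"
    unfolding Vun by (rule LIMSEQ_le_const2) (use Vm in auto)
qed

lemma prod_int:
  fixes f :: "'a \<Rightarrow> real" and g :: "'b \<Rightarrow> real"
  assumes P1: "prob_space M1" and P2: "prob_space M2"
    and f: "integrable M1 f" and g: "integrable M2 g"
  shows "integrable (M1 \<Otimes>\<^sub>M M2) (\<lambda>z. f (fst z) * g (snd z))"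
    and "(\<integral>z. f (fst z) * g (snd z) \<partial>(M1 \<Otimes>\<^sub>M M2)) = (\<integral>x. f x \<partial>M1) * (\<integral>y. g y \<partial>M2)"
proof -
  interpret pair_prob_space M1 M2
    using P1 P2 by (simp add: pair_prob_space.intro pair_sigma_finite_def prob_space_imp_sigma_finite)
  have [measurable]: "f \<in> borel_measurable M1" "g \<in> borel_measurable M2" using f g by auto
  show I: "integrable (M1 \<Otimes>\<^sub>M M2) (\<lambda>z. f (fst z) * g (snd z))"
  proof (rule Fubini_integrable)
    show "(\<lambda>z. f (fst z) * g (snd z)) \<in> borel_measurable (M1 \<Otimes>\<^sub>M M2)" by measurable
    have "(\<lambda>x. \<integral> y. norm (f (fst (x, y)) * g (snd (x, y))) \<partial>M2) = (\<lambda>x. norm (f x) * (\<integral>y. norm (g y) \<partial>M2))"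
      by (simp add: abs_mult)
    then show "integrable M1 (\<lambda>x. \<integral> y. norm (f (fst (x, y)) * g (snd (x, y))) \<partial>M2)"
      using f by (simp add: integrable_mult_left)
    show "AE x in M1. integrable M2 (\<lambda>y. f (fst (x, y)) * g (snd (x, y)))"
      using g by simp
  qed
  have "(\<integral>z. f (fst z) * g (snd z) \<partial>(M1 \<Otimes>\<^sub>M M2)) = (\<integral>x. (\<integral>y. f x * g y \<partial>M2) \<partial>M1)"
    using integral_fst'[OF I] by simp
  also have "\<dots> = (\<integral>x. f x \<partial>M1) * (\<integral>y. g y \<partial>M2)" by simp
  finally show "(\<integral>z. f (fst z) * g (snd z) \<partial>(M1 \<Otimes>\<^sub>M M2)) = (\<integral>x. f x \<partial>M1) * (\<integral>y. g y \<partial>M2)" .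
qed

lemma pw1:
  fixes s b p :: real assumes "0 \<le> s" "0 \<le> b" "0 \<le> p"
  shows "max b s - (s + (b - s) * (if b > p \<and> p \<ge> s then 1 else 0)) \<le>
    indicator {s. p < s} s * max (b - p) 0 + p * (indicator {s. s < p} s * indicator {b. b \<le> p} b)"
  using assms by (auto simp: indicator_def max_def)

lemma pw2:
  fixes s b p :: real assumes "0 \<le> s" "0 \<le> b" "0 \<le> p"
  shows "p + 1 * max (b - p) 0 - p * (indicator {s. s < p} s * indicator {b. b \<le> p} b) \<le> max b s"
  using assms by (auto simp: indicator_def max_def)

theorem lemma12:
  fixes FS FB :: "real measure"
  assumes "valid_dist FS" and "valid_dist FB"
    and "measure FB {b. b \<le> p_star FS} \<le> 1/5"
  shows "GFT_W (p_star FS) FS FB \<ge> 17/25 * OPT_W FS FB"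
proof -
  define p where "p = p_star FS"
  have p0: "0 \<le> p" and al: "measure FS {s. p < s} \<le> 1/5" and si: "measure FS {s. s < p} \<le> 4/5"
    using pstar_facts[OF assms(1)] by (auto simp: p_def)
  have be: "measure FB {b. b \<le> p} \<le> 1/5" using assms(3) by (simp add: p_def)
  have PS: "prob_space FS" and SE[measurable_cong]: "sets FS = sets borel" and AES: "AE x in FS. 0 \<le> x"
    and IS: "integrable FS (\<lambda>x. x)" using assms(1) by (auto simp: valid_dist_def)
  have PB: "prob_space FB" and BE[measurable_cong]: "sets FB = sets borel" and AEB: "AE x in FB. 0 \<le> x"
    and IB: "integrable FB (\<lambda>x. x)" using assms(2) by (auto simp: valid_dist_def)
  interpret S: prob_space FS by (rule PS)
  interpret B: prob_space FB by (rule PB)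
  interpret pair_prob_space FS FB
    using PS PB by (simp add: pair_prob_space.intro pair_sigma_finite_def prob_space_imp_sigma_finite)
  have spS: "space FS = UNIV" using sets_eq_imp_space_eq[OF SE] by simp
  have spB: "space FB = UNIV" using sets_eq_imp_space_eq[OF BE] by simp
  let ?P = "FS \<Otimes>\<^sub>M FB"
  define D where "D = (\<integral>b. max (b - p) 0 \<partial>FB)"
  have intD: "integrable FB (\<lambda>b. max (b - p) 0)" using IB by auto
  have D0: "0 \<le> D" unfolding D_def by (rule integral_nonneg_AE) simp
  define al where "al = measure FS {s. p < s}"
  define si where "si = measure FS {s. s < p}"
  define be where "be = measure FB {b. b \<le> p}"
  have iS1: "integrable FS (indicator {s. p < s} :: real \<Rightarrow> real)" by (auto intro!: integrable_real_indicator simp: less_top[symmetric] S.emeasure_finite B.emeasure_finite)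
  have iS2: "integrable FS (indicator {s. s < p} :: real \<Rightarrow> real)" by (auto intro!: integrable_real_indicator simp: less_top[symmetric] S.emeasure_finite B.emeasure_finite)
  have iB2: "integrable FB (indicator {b. b \<le> p} :: real \<Rightarrow> real)" by (auto intro!: integrable_real_indicator simp: less_top[symmetric] S.emeasure_finite B.emeasure_finite)
  have AEP: "AE z in ?P. 0 \<le> fst z \<and> 0 \<le> snd z"
  proof (rule AE_pair_measure)
    show "{x \<in> space ?P. 0 \<le> fst x \<and> 0 \<le> snd x} \<in> sets ?P" by measurable
    show "AE x in FS. AE y in FB. 0 \<le> fst (x, y) \<and> 0 \<le> snd (x, y)"
      using AES
    proof eventually_elim
      case (elim x) show ?case using AEB by eventually_elim (use elim in auto)
    qed
  qed
  define L where "L z = indicator {s. p < s} (fst z) * max (snd z - p) 0 + p * (indicator {s. s < p} (fst z) * indicator {b. b \<le> p} (snd z))" for z :: "real \<times> real"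
  have L1: "integrable ?P (\<lambda>z. indicator {s. p < s} (fst z) * max (snd z - p) 0)"
    and L1e: "(\<integral>z. indicator {s. p < s} (fst z) * max (snd z - p) 0 \<partial>?P) = al * D"
    using prod_int[OF PS PB iS1 intD] by (auto simp: al_def D_def spS)
  have L2: "integrable ?P (\<lambda>z. indicator {s. s < p} (fst z) * indicator {b. b \<le> p} (snd z) :: real)"
    and L2e: "(\<integral>z. indicator {s. s < p} (fst z) * indicator {b. b \<le> p} (snd z) \<partial>?P) = si * be"
    using prod_int[OF PS PB iS2 iB2] by (auto simp: si_def be_def spS spB)
  have intL: "integrable ?P L" unfolding L_def using L1 L2 by auto
  have IL: "(\<integral>z. L z \<partial>?P) = al * D + p * (si * be)"
    unfolding L_def using L1 L2 L1e L2e by simp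
  have K1: "integrable ?P (\<lambda>z. 1 * max (snd z - p) 0)"
    and K1e: "(\<integral>z. 1 * max (snd z - p) 0 \<partial>?P) = D"
    using prod_int[OF PS PB _ intD, of "\<lambda>_. 1"] by (auto simp: D_def S.prob_space)
  define K where "K z = p + 1 * max (snd z - p) 0 - p * (indicator {s. s < p} (fst z) * indicator {b. b \<le> p} (snd z))" for z :: "real \<times> real"
  have intK: "integrable ?P K" unfolding K_def using K1 L2 by auto
  have IK: "(\<integral>z. K z \<partial>?P) = p + D - p * (si * be)"
    unfolding K_def using K1 L2 K1e L2e by (simp add: prob_space)
  have A1: "integrable ?P (\<lambda>z. \<bar>fst z\<bar> * 1)" using prod_int[OF PS PB _ _, of abs "\<lambda>_. 1"] IS by auto
  have A2: "integrable ?P (\<lambda>z. 1 * \<bar>snd z\<bar>)" using prod_int[OF PS PB _ _, of "\<lambda>_. 1" abs] IB by auto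
  have A: "integrable ?P (\<lambda>z. \<bar>fst z\<bar> + \<bar>snd z\<bar>)" using A1 A2 by auto
  define g where "g z = fst z + (snd z - fst z) * (if snd z > p \<and> p \<ge> fst z then 1 else 0)" for z :: "real \<times> real"
  define h where "h z = max (snd z) (fst z)" for z :: "real \<times> real"
  have intg: "integrable ?P g"
  proof (rule Bochner_Integration.integrable_bound[OF A])
    show "g \<in> borel_measurable ?P" unfolding g_def by measurable
    show "AE x in ?P. norm (g x) \<le> norm (\<bar>fst x\<bar> + \<bar>snd x\<bar>)" by (auto simp: g_def)
  qed
  have inth: "integrable ?P h"
  proof (rule Bochner_Integration.integrable_bound[OF A])
    show "h \<in> borel_measurable ?P" unfolding h_def by measurable
    show "AE x in ?P. norm (h x) \<le> norm (\<bar>fst x\<bar> + \<bar>snd x\<bar>)" by (auto simp: h_def)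
  qed
  have "(\<integral>z. h z - L z \<partial>?P) \<le> (\<integral>z. g z \<partial>?P)"
  proof (rule integral_mono_AE)
    show "integrable ?P (\<lambda>z. h z - L z)" using inth intL by auto
    show "integrable ?P g" by (rule intg)
    show "AE z in ?P. h z - L z \<le> g z" using AEP
    proof eventually_elim
      case (elim z)
      then show ?case using pw1[of "fst z" "snd z" p] p0 unfolding g_def h_def L_def by linarith
    qed
  qed
  then have G: "(\<integral>z. h z \<partial>?P) - (al * D + p * (si * be)) \<le> (\<integral>z. g z \<partial>?P)"
    using inth intL IL by simp
  have H: "p + D - p * (si * be) \<le> (\<integral>z. h z \<partial>?P)"
    unfolding IK[symmetric]
  proof (rule integral_mono_AE[OF intK inth])
    show "AE z in ?P. K z \<le> h z" using AEP
    proof eventually_elim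
      case (elim z)
      then show ?case using pw2[of "fst z" "snd z" p] p0 unfolding K_def h_def by linarith
    qed
  qed
  have sb: "si * be \<le> 4/5 * (1/5)"
    using si be by (intro mult_mono) (auto simp: si_def be_def)
  have psb: "p * (si * be) \<le> p * (4/25)" using mult_left_mono[OF sb p0] by simp
  have aD: "al * D \<le> 1/5 * D" using mult_right_mono[OF _ D0, of al "1/5"] al unfolding al_def by linarith
  have "17/25 * (\<integral>z. h z \<partial>?P) \<le> (\<integral>z. g z \<partial>?P)"
    using G H psb aD D0 p0 by linarith
  then show ?thesis unfolding GFT_W_def OPT_W_def g_def h_def p_def by simp
qed

end
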